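(* Let $c>0$, $k>1$, $\eta\in(0,\tfrac12)$, $Q\ge 0$. Consider the $2\times1$ merge network with upstream capacities $c_1=c$, $c_2=kc$, inflows $f_1=\eta c$, $f_2=k\eta c$, downstream capacity $c_0=(k+1)c$ and constant downstream queue length $Q$, with weights $\gamma_0,\gamma_1,\gamma_2>0$. For an ordered pair $(u,s)\in\{(1,2),(2,1)\}$ set $$q_{s,act}=\frac{\gamma_0}{\gamma_s}Q+\frac{\gamma_u f_u-\gamma_0 Q}{\gamma_s c_s}\,c_u,$$ and say that the R1 state $(u,s)$ can exist if $q_{s,act}\ge c_s$. Then, in regime R1: (a) the state $(u,s)=(1,2)$ can exist when: for $\gamma_0=\gamma_1=\gamma_2=1$, $Q\ge \frac{k^2-\eta}{k-1}c$; for $\gamma_i=1/c_i$ ($i=0,1,2$), $Q\ge \frac{k-\eta}{k-1}(k+1)c$; (b) the state $(u,s)=(2,1)$ can exist when: for $\gamma_0=\gamma_1=\gamma_2=1$, $Q\le \frac{k^2\eta-1}{k-1}c$; for $\gamma_i=1/c_i$ ($i=0,1,2$), $Q\le \frac{k\eta-1}{k-1}(k+1)c$.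
   Context: Model: two upstream queues merging into a downstream queue of constant length $Q$; the generalized backpressure priority of upstream queue $i$ is $p_i=(\gamma_i q_i-\gamma_0 Q)c_i$, and each upstream queue length is at least its inflow $f_i$, so its minimal priority is $p_i(f_i)$. The activation priority $p_{act}=\max_j p_j(f_j)$ is the minimal priority a queue needs to be activated, and $q_{i,act}=\frac{\gamma_0}{\gamma_i}Q+\frac{p_{act}}{\gamma_i c_i}$ is the corresponding queue length. Regime R1: one upstream queue, $u$, is unsaturated (outflow below capacity) and the other, $s$, is saturated (outflow equal to capacity $c_s$ when activated). In R1, $p_{act}=p_u(f_u)$, and queue $s$ being saturated corresponds to $q_{s,act}\ge c_s$. The weights $\gamma\equiv1$ give classical backpressure; $\gamma_i=1/c_i$ (including $\gamma_0=1/c_0$ for the downstream queue) give the re-scaled variant. *)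

theory Defs
  imports Complex_Main
begin

text \<open>2x1 merge network: index 0 is the downstream queue, 1 and 2 the upstream queues.
  Capacities c_1 = c, c_2 = k c, c_0 = (k+1) c; inflows f_1 = eta c, f_2 = k eta c.\<close>

definition cap :: "real \<Rightarrow> real \<Rightarrow> nat \<Rightarrow> real" where
  "cap c k i = (if i = 0 then (k + 1) * c else if i = 1 then c else k * c)"

definition inflow :: "real \<Rightarrow> real \<Rightarrow> real \<Rightarrow> nat \<Rightarrow> real" where
  "inflow c k \<eta> i = (if i = 1 then \<eta> * c else k * \<eta> * c)"

definition q_s_act :: "(nat \<Rightarrow> real) \<Rightarrow> real \<Rightarrow> real \<Rightarrow> real \<Rightarrow> real \<Rightarrow> nat \<Rightarrow> nat \<Rightarrow> real" where
  "q_s_act \<gamma> c k \<eta> Q u s =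
     \<gamma> 0 / \<gamma> s * Q + (\<gamma> u * inflow c k \<eta> u - \<gamma> 0 * Q) / (\<gamma> s * cap c k s) * cap c k u"

definition R1_can_exist :: "(nat \<Rightarrow> real) \<Rightarrow> real \<Rightarrow> real \<Rightarrow> real \<Rightarrow> real \<Rightarrow> nat \<Rightarrow> nat \<Rightarrow> bool" where
  "R1_can_exist \<gamma> c k \<eta> Q u s \<longleftrightarrow> q_s_act \<gamma> c k \<eta> Q u s \<ge> cap c k s"

definition gamma_classic :: "nat \<Rightarrow> real" where
  "gamma_classic = (\<lambda>_. 1)"

definition gamma_rescaled :: "real \<Rightarrow> real \<Rightarrow> nat \<Rightarrow> real" where
  "gamma_rescaled c k = (\<lambda>i. 1 / cap c k i)"

end

theory Submission
  imports Defs
begin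

lemma qc: "(c::real) \<noteq> 0 \<Longrightarrow> Q / ((k + 1) * c) * c = Q/(k+1)"
  apply (simp only: times_divide_eq_left)
  apply (rule mult_divide_mult_cancel_right)
  apply assumption
  done

lemma cancel_c: "(c::real) > 0 \<Longrightarrow> (X \<le> Y) = (c * X \<le> c * Y)" by simp

theorem proposition3:
  fixes c k \<eta> Q :: real
  assumes "c > 0" and "k > 1" and "0 < \<eta>" and "\<eta> < 1/2" and "Q \<ge> 0"
  shows "(R1_can_exist gamma_classic c k \<eta> Q 1 2 \<longleftrightarrow> Q \<ge> (k^2 - \<eta>) / (k - 1) * c)
       \<and> (R1_can_exist (gamma_rescaled c k) c k \<eta> Q 1 2 \<longleftrightarrow> Q \<ge> (k - \<eta>) / (k - 1) * (k + 1) * c)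
       \<and> (R1_can_exist gamma_classic c k \<eta> Q 2 1 \<longleftrightarrow> Q \<le> (k^2 * \<eta> - 1) / (k - 1) * c)
       \<and> (R1_can_exist (gamma_rescaled c k) c k \<eta> Q 2 1 \<longleftrightarrow> Q \<le> (k * \<eta> - 1) / (k - 1) * (k + 1) * c)"
proof -
  have c0: "c \<noteq> 0" and k0: "k \<noteq> 0" and k1: "k - 1 > 0" and kp: "k + 1 > 0" "k + 1 \<noteq> 0"
    using assms by auto
  have kc: "k * c > 0" using assms by simp
  have kc1: "(k+1) * c > 0" using assms by simp
  note defs = R1_can_exist_def q_s_act_def gamma_classic_def gamma_rescaled_def cap_def inflow_def
  have ck: "c + c * k \<noteq> 0" "c * k + c \<noteq> 0" "(k+1)*c \<noteq> 0" using kc1 by (auto simp: algebra_simps)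
  have e1: "q_s_act gamma_classic c k \<eta> Q 1 2 = Q + (\<eta> * c - Q) / k"
    using c0 k0 by (simp add: defs field_simps)
  have e2: "q_s_act (gamma_rescaled c k) c k \<eta> Q 1 2 = (k - 1) * Q / (k + 1) + \<eta> * c"
  proof -
    have a: "(1 / ((k + 1) * c)) / (1 / (k * c)) = k / (k+1)" using c0 k0 kp ck by (simp add: field_simps)
    have b: "1 / (k * c) * (k * c) = 1" using c0 k0 by simp
    have d: "1 / c * (\<eta> * c) = \<eta>" using c0 by simp
    have "q_s_act (gamma_rescaled c k) c k \<eta> Q 1 2 = k / (k+1) * Q + (\<eta> - Q / ((k + 1) * c)) * c"
      unfolding q_s_act_def gamma_rescaled_def cap_def inflow_def using a b d by simp
    also have "\<dots> = k / (k+1) * Q + \<eta> * c - Q / (k + 1)" using qc[OF c0, of Q k] by (simp only: left_diff_distrib)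
    also have "\<dots> = (k - 1) * Q / (k + 1) + \<eta> * c" by (simp add: diff_divide_distrib algebra_simps)
    finally show ?thesis .
  qed
  have e3: "q_s_act gamma_classic c k \<eta> Q 2 1 = (1 - k) * Q + k^2 * \<eta> * c"
    using c0 k0 by (simp add: defs field_simps power2_eq_square)
  have e4: "q_s_act (gamma_rescaled c k) c k \<eta> Q 2 1 = (1 - k) * Q / (k + 1) + k * \<eta> * c"
  proof -
    have a: "(1 / ((k + 1) * c)) / (1 / c) = 1 / (k+1)" using c0 k0 kp ck by (simp add: field_simps)
    have b: "1 / c * c = 1" using c0 by simp
    have d: "1 / (k * c) * (k * \<eta> * c) = \<eta>" using c0 k0 by simp
    have "q_s_act (gamma_rescaled c k) c k \<eta> Q 2 1 = 1 / (k+1) * Q + (\<eta> - Q / ((k + 1) * c)) * (k * c)"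
      unfolding q_s_act_def gamma_rescaled_def cap_def inflow_def using a b d by simp
    also have "\<dots> = 1 / (k+1) * Q + k * \<eta> * c - k * Q / (k + 1)"
    proof -
      have qk: "Q / ((k+1)*c) * (k*c) = k * Q / (k+1)"
      proof -
        have "Q / ((k+1)*c) * (k*c) = k * (Q / ((k+1)*c) * c)" by (simp only: mult_ac)
        also have "\<dots> = k * (Q / (k+1))" using qc[OF c0, of Q k] by simp
        finally show ?thesis by simp
      qed
      show ?thesis by (simp only: left_diff_distrib qk) (simp add: algebra_simps)
    qed
    also have "\<dots> = (1 - k) * Q / (k + 1) + k * \<eta> * c" by (simp add: diff_divide_distrib algebra_simps)
    finally show ?thesis .
  qed
  show ?thesis
  proof (intro conjI)
    show "R1_can_exist gamma_classic c k \<eta> Q 1 2 \<longleftrightarrow> Q \<ge> (k^2 - \<eta>) / (k - 1) * c"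
      unfolding R1_can_exist_def e1 using k1 assms
      by (simp add: cap_def field_simps power2_eq_square)
    show "R1_can_exist (gamma_rescaled c k) c k \<eta> Q 1 2 \<longleftrightarrow> Q \<ge> (k - \<eta>) / (k - 1) * (k + 1) * c"
      unfolding R1_can_exist_def e2 using k1 kp assms
      by (simp add: cap_def field_simps)
    show "R1_can_exist gamma_classic c k \<eta> Q 2 1 \<longleftrightarrow> Q \<le> (k^2 * \<eta> - 1) / (k - 1) * c"
      unfolding R1_can_exist_def e3 using k1 assms
      by (simp add: cap_def field_simps power2_eq_square)
    show "R1_can_exist (gamma_rescaled c k) c k \<eta> Q 2 1 \<longleftrightarrow> Q \<le> (k * \<eta> - 1) / (k - 1) * (k + 1) * c"
      unfolding R1_can_exist_def e4 using k1 kp assms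
      by (simp add: cap_def field_simps)
  qed
qed

end
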